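(* Suppose $s\in S$ is an element all of whose monomials have degree $0$ modulo $\vec c$ (i.e.\ degree in $\mathbb{Z}\vec c\subset L$). Then the non-constant terms of $s$ lie in the ideal $(x^{pq-1},x^py,xy^q,y^{pq-1})$.
   Context: Let $p,q\ge2$ be integers. Let $L$ be the abelian group generated by $\vec x,\vec y,\vec c$ modulo $p\vec x+\vec y=\vec x+q\vec y=\vec c$, and let $S=\mathbb{C}[x,y]$ be $L$-graded with $\deg x=\vec x$, $\deg y=\vec y$. *)

theory Defs
  imports Complex_Main "HOL-Library.Poly_Mapping" "HOL-Library.Product_Plus"
begin

text \<open>The polynomial ring S = C[x,y]: finitely supported maps from exponent pairs
  (a,b) (standing for the monomial x^a y^b) to complex coefficients, with the
  convolution product of Poly_Mapping.\<close>
type_synonym S = "(nat \<times> nat) \<Rightarrow>\<^sub>0 complex"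

definition X :: S where "X = Poly_Mapping.single (1, 0) 1"
definition Y :: S where "Y = Poly_Mapping.single (0, 1) 1"

text \<open>The group L = Z x + Z y + Z c modulo the relations p x + y = c, x + q y = c.
  An element u x + v y + w c is represented by (u,v,w) in Z^3; L is Z^3 modulo the
  subgroup generated by (p,1,-1) and (1,q,-1).\<close>
definition L_rel :: "nat \<Rightarrow> nat \<Rightarrow> (int \<times> int \<times> int) set" where
  "L_rel p q = {(m * int p + n, m + n * int q, - m - n) | m n. True}"

definition L_eq :: "nat \<Rightarrow> nat \<Rightarrow> int \<times> int \<times> int \<Rightarrow> int \<times> int \<times> int \<Rightarrow> bool" where
  "L_eq p q u v \<longleftrightarrow> u - v \<in> L_rel p q"

definition mon_deg :: "nat \<times> nat \<Rightarrow> int \<times> int \<times> int" where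
  "mon_deg ab = (int (fst ab), int (snd ab), 0)"

definition in_Zc :: "nat \<Rightarrow> nat \<Rightarrow> int \<times> int \<times> int \<Rightarrow> bool" where
  "in_Zc p q u \<longleftrightarrow> (\<exists>k::int. L_eq p q u (0, 0, k))"

definition in_ideal4 :: "nat \<Rightarrow> nat \<Rightarrow> S \<Rightarrow> bool" where
  "in_ideal4 p q f \<longleftrightarrow> (\<exists>a b c d :: S.
     f = a * X ^ (p * q - 1) + b * (X ^ p * Y) + c * (X * Y ^ q) + d * Y ^ (p * q - 1))"

end

theory Submission
  imports Defs
begin

lemma arith_key:
  fixes a b p q :: nat and m n :: int
  assumes p: "p \<ge> 2" and q: "q \<ge> 2" and nz: "(a, b) \<noteq> (0, 0)"
    and ea: "int a = m * int p + n" and eb: "int b = m + n * int q"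
  shows "a \<ge> p * q - 1 \<or> (a \<ge> p \<and> b \<ge> 1) \<or> (a \<ge> 1 \<and> b \<ge> q) \<or> b \<ge> p * q - 1"
proof -
  have pq: "int (p * q - 1) = int p * int q - 1" using p q
    by (simp add: of_nat_diff)
  define P where "P = int p * int q - 1"
  have A: "int a * int q - int b = m * P" using ea eb unfolding P_def by (simp add: algebra_simps)
  have B: "int b * int p - int a = n * P" using ea eb unfolding P_def by (simp add: algebra_simps)
  have "int p * int q \<ge> 2 * 2" using p q by (intro mult_mono) auto
  then have P: "P > 0" unfolding P_def by linarith
  show ?thesis
  proof (cases "b = 0")
    case True
    then have "a > 0" using nz by auto
    have e: "- int a = n * P" using B True by simp
    have "n < 0"
    proof (rule ccontr)
      assume "\<not> n < 0"
      then have "n * P \<ge> 0" using P by simp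
      then show False using e \<open>a > 0\<close> by linarith
    qed
    then have "n * P \<le> (-1) * P" using P by (intro mult_right_mono) auto
    then have "int a \<ge> int (p*q-1)" using e pq[folded P_def] by linarith
    then show ?thesis by simp
  next
    case bnz: False
    show ?thesis
    proof (cases "a = 0")
      case True
      have e: "- int b = m * P" using A True by simp
      have "m < 0"
      proof (rule ccontr)
        assume "\<not> m < 0"
        then have "m * P \<ge> 0" using P by simp
        then show False using e bnz by linarith
      qed
      then have "m * P \<le> (-1) * P" using P by (intro mult_right_mono) auto
      then have "int b \<ge> int (p*q-1)" using e pq[folded P_def] by linarith
      then show ?thesis by simp
    next
      case anz: False
      show ?thesis
      proof (rule ccontr)
        assume "\<not> ?thesis"
        then have ap: "a < p" and bq: "b < q" using anz bnz by auto
        have "int a * int q \<le> (int p - 1) * int q" using ap by (intro mult_right_mono) auto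
        then have u: "int a * int q - int b < P" using bnz q unfolding P_def by (simp add: algebra_simps)
        have "int a * int q \<ge> 1 * int q" using anz by (intro mult_right_mono) auto
        then have l: "int a * int q - int b > 0" using bq by linarith
        have "m > 0"
        proof (rule ccontr)
          assume "\<not> m > 0"
          then have "m * P \<le> 0" using P by (simp add: mult_nonpos_nonneg)
          then show False using l A by linarith
        qed
        then have "m * P \<ge> 1 * P" using P by (intro mult_right_mono) auto
        then show False using u A by linarith
      qed
    qed
  qed
qed

lemma pair_add_nat: "((a::nat), (b::nat)) + (c, d) = (a + c, b + d)"
  by (simp add: plus_prod_def)

lemma single00: "Poly_Mapping.single ((0::nat), (0::nat)) (1::complex) = 1"
  by (metis single_one zero_prod_def)

lemma Xpow: "X ^ n = Poly_Mapping.single (n, 0) 1"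
  by (induction n) (auto simp: X_def mult_single pair_add_nat single00)

lemma Ypow: "Y ^ n = Poly_Mapping.single (0, n) 1"
  by (induction n) (auto simp: Y_def mult_single pair_add_nat single00)

lemma single_split:
  fixes a b i j :: nat
  assumes "i \<le> a" "j \<le> b"
  shows "Poly_Mapping.single (a, b) (c::complex) =
         Poly_Mapping.single (a - i, b - j) c * Poly_Mapping.single (i, j) 1"
  proof -
  have "(a - i + i, b - j + j) = (a, b)" using assms by simp
  then show ?thesis by (simp add: mult_single pair_add_nat)
qed

lemma ideal_add:
  assumes "in_ideal4 p q f" "in_ideal4 p q g"
  shows "in_ideal4 p q (f + g)"
proof -
  from assms obtain a b c d a' b' c' d' where
    "f = a * X ^ (p * q - 1) + b * (X ^ p * Y) + c * (X * Y ^ q) + d * Y ^ (p * q - 1)"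
    "g = a' * X ^ (p * q - 1) + b' * (X ^ p * Y) + c' * (X * Y ^ q) + d' * Y ^ (p * q - 1)"
    unfolding in_ideal4_def by blast
  then have "f + g = (a + a') * X ^ (p * q - 1) + (b + b') * (X ^ p * Y)
      + (c + c') * (X * Y ^ q) + (d + d') * Y ^ (p * q - 1)"
    by (simp add: algebra_simps)
  then show ?thesis unfolding in_ideal4_def by blast
qed

lemma ideal_zero: "in_ideal4 p q 0"
  unfolding in_ideal4_def by (rule exI[of _ 0])+ simp

lemma ideal_sum:
  assumes "\<And>m. m \<in> A \<Longrightarrow> in_ideal4 p q (f m)"
  shows "in_ideal4 p q (sum f A)"
  using assms
proof (induction A rule: infinite_finite_induct)
  case (infinite A) then show ?case by (simp add: ideal_zero)
next
  case empty then show ?case by (simp add: ideal_zero)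
next
  case (insert x F) then show ?case by (simp add: ideal_add)
qed

lemma ideal_mono:
  assumes "a \<ge> p * q - 1 \<or> (a \<ge> p \<and> b \<ge> 1) \<or> (a \<ge> 1 \<and> b \<ge> q) \<or> b \<ge> p * q - 1"
  shows "in_ideal4 p q (Poly_Mapping.single (a, b) c)"
proof -
  have XpY: "X ^ p * Y = Poly_Mapping.single (p, 1) 1"
    by (simp add: Xpow Y_def mult_single pair_add_nat)
  have XYq: "X * Y ^ q = Poly_Mapping.single (1, q) 1"
    by (simp add: Ypow X_def mult_single pair_add_nat)
  from assms consider "a \<ge> p * q - 1" | "a \<ge> p" "b \<ge> 1" | "a \<ge> 1" "b \<ge> q" | "b \<ge> p * q - 1"
    by blast
  then show ?thesis
  proof cases
    case 1
    then have "Poly_Mapping.single (a, b) c = Poly_Mapping.single (a - (p*q-1), b - 0) c * X ^ (p*q-1)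
      + 0 * (X ^ p * Y) + 0 * (X * Y ^ q) + 0 * Y ^ (p * q - 1)"
      by (simp only: Xpow single_split[symmetric]) simp
    then show ?thesis unfolding in_ideal4_def by blast
  next
    case 2
    then have "Poly_Mapping.single (a, b) c = 0 * X ^ (p*q-1)
      + Poly_Mapping.single (a - p, b - 1) c * (X ^ p * Y) + 0 * (X * Y ^ q) + 0 * Y ^ (p * q - 1)"
      by (simp only: XpY single_split[symmetric]) simp
    then show ?thesis unfolding in_ideal4_def by blast
  next
    case 3
    then have "Poly_Mapping.single (a, b) c = 0 * X ^ (p*q-1)
      + 0 * (X ^ p * Y) + Poly_Mapping.single (a - 1, b - q) c * (X * Y ^ q) + 0 * Y ^ (p * q - 1)"
      by (simp only: XYq single_split[symmetric]) simp
    then show ?thesis unfolding in_ideal4_def by blast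
  next
    case 4
    then have "Poly_Mapping.single (a, b) c = 0 * X ^ (p*q-1)
      + 0 * (X ^ p * Y) + 0 * (X * Y ^ q) + Poly_Mapping.single (a - 0, b - (p*q-1)) c * Y ^ (p * q - 1)"
      by (simp only: Ypow single_split[symmetric]) simp
    then show ?thesis unfolding in_ideal4_def by blast
  qed
qed

lemma expand: "(f::S) = (\<Sum>m\<in>Poly_Mapping.keys f. Poly_Mapping.single m (Poly_Mapping.lookup f m))"
  by (rule poly_mapping_eqI) (auto simp: lookup_sum lookup_single when_def in_keys_iff
      sum.If_cases)

theorem lemma2p3:
  fixes p q :: nat and s :: S
  assumes "p \<ge> 2" and "q \<ge> 2"
    and "\<forall>m \<in> Poly_Mapping.keys s. in_Zc p q (mon_deg m)"
  shows "in_ideal4 p q (s - Poly_Mapping.single (0, 0) (Poly_Mapping.lookup s (0, 0)))"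
proof -
  define t where "t = s - Poly_Mapping.single (0, 0) (Poly_Mapping.lookup s (0, 0))"
  have lt: "Poly_Mapping.lookup t m = (if m = (0,0) then 0 else Poly_Mapping.lookup s m)" for m
    unfolding t_def by (simp add: lookup_minus lookup_single when_def)
  have kt: "Poly_Mapping.keys t \<subseteq> Poly_Mapping.keys s - {(0,0)}"
    using lt by (auto simp: in_keys_iff split: if_splits)
  have "in_ideal4 p q (\<Sum>m\<in>Poly_Mapping.keys t. Poly_Mapping.single m (Poly_Mapping.lookup t m))"
  proof (rule ideal_sum)
    fix m assume "m \<in> Poly_Mapping.keys t"
    with kt have m: "m \<in> Poly_Mapping.keys s" "m \<noteq> (0,0)" by auto
    obtain a b where ab: "m = (a, b)" by (cases m)
    from assms(3) m(1) obtain k :: int where "L_eq p q (mon_deg m) (0, 0, k)"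
      unfolding in_Zc_def by blast
    then obtain mm n :: int where "(int a, int b, - k) = (mm * int p + n, mm + n * int q, - mm - n)"
      unfolding L_eq_def L_rel_def mon_deg_def ab by auto
    then have "int a = mm * int p + n" "int b = mm + n * int q" by auto
    from arith_key[OF assms(1,2) m(2)[unfolded ab] this]
    show "in_ideal4 p q (Poly_Mapping.single m (Poly_Mapping.lookup t m))"
      unfolding ab by (rule ideal_mono)
  qed
  then show ?thesis using expand[of t] unfolding t_def by simp
qed

end
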